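(* Let $X$ be a Hausdorff first-countable topological space and let $f:X\to X$ be a closed mapping which is a weak topological contraction. Then $f$ has a unique fixed point.
   Context: A mapping is closed if it maps closed sets to closed sets (continuity is not assumed). A mapping $f:X\to X$ is a weak topological contraction if for every open cover $\mathcal{U}$ of $X$ and every pair of points $x,y\in X$ there exist $n\in\mathbb{N}_0=\{0,1,2,\dots\}$ and $U\in\mathcal{U}$ such that $f^n[\{x,y\}]\subseteq U$, where $f^n$ is the $n$-fold iterate of $f$ and $f^0$ is the identity. *)

theory Defs
  imports "HOL-Analysis.Analysis"
begin

definition closed_map_on_space :: "('a::topological_space \<Rightarrow> 'a) \<Rightarrow> bool" where
  "closed_map_on_space f \<longleftrightarrow> (\<forall>S. closed S \<longrightarrow> closed (f ` S))"

definition weak_topological_contraction :: "('a::topological_space \<Rightarrow> 'a) \<Rightarrow> bool" where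
  "weak_topological_contraction f \<longleftrightarrow>
     (\<forall>\<U>. (\<forall>U\<in>\<U>. open U) \<and> \<Union>\<U> = UNIV \<longrightarrow>
        (\<forall>x y. \<exists>n::nat. \<exists>U\<in>\<U>. (f ^^ n) ` {x, y} \<subseteq> U))"

end

theory Submission
  imports Defs
begin

lemma closed_seq_limit:
  fixes a :: "nat \<Rightarrow> 'a::t2_space"
  assumes "a \<longlonglongrightarrow> z"
  shows "closed (insert z (range a))"
proof -
  have "open (- insert z (range a))"
  proof (subst open_subopen, intro ballI)
    fix y assume y: "y \<in> - insert z (range a)"
    then have "y \<noteq> z" by auto
    then obtain U V where UV: "open U" "open V" "y \<in> U" "z \<in> V" "U \<inter> V = {}"
      using hausdorff[of y z] by blast
    have "eventually (\<lambda>k. a k \<in> V) sequentially"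
      using assms UV(2,4) by (rule topological_tendstoD)
    then obtain K where K: "\<And>k. k \<ge> K \<Longrightarrow> a k \<in> V"
      unfolding eventually_sequentially by blast
    define W where "W = U - a ` {..<K}"
    have "open W" unfolding W_def using UV(1) by (intro open_Diff finite_imp_closed) auto
    moreover have "y \<in> W" using y UV(3) unfolding W_def by auto
    moreover have "W \<subseteq> - insert z (range a)"
    proof
      fix w assume w: "w \<in> W"
      have "w \<noteq> z" using w UV unfolding W_def by auto
      moreover have "w \<noteq> a k" for k
      proof (cases "k < K")
        case True then show ?thesis using w unfolding W_def by auto
      next
        case False then have "a k \<in> V" using K by auto
        then show ?thesis using w UV(5) unfolding W_def by auto
      qed
      ultimately show "w \<in> - insert z (range a)" by auto
    qed
    ultimately show "\<exists>T. open T \<and> y \<in> T \<and> T \<subseteq> - insert z (range a)" by blast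
  qed
  then show ?thesis by (simp add: closed_def)
qed

lemma funpow_period:
  assumes "(f ^^ d) z = z"
  shows "(f ^^ (q * d + r)) z = (f ^^ r) z"
proof (induction q)
  case 0 then show ?case by simp
next
  case (Suc q)
  have "(f ^^ (Suc q * d + r)) z = (f ^^ (q * d + r)) ((f ^^ d) z)"
  proof -
    have "Suc q * d + r = (q * d + r) + d" by simp
    then show ?thesis by (simp only: funpow_add comp_def)
  qed
  then show ?case using Suc assms by simp
qed

lemma no_periodic:
  fixes f :: "'a::t2_space \<Rightarrow> 'a"
  assumes wtc: "weak_topological_contraction f"
    and nofix: "\<And>x. f x \<noteq> x"
    and d: "d > 0" and per: "(f ^^ d) z = z"
  shows False
proof -
  define P where "P = (\<lambda>i. (f ^^ i) z) ` {..<d}"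
  have finP: "finite P" unfolding P_def by auto
  have inP: "(f ^^ n) z \<in> P" for n
  proof -
    have "(f ^^ n) z = (f ^^ ((n div d) * d + n mod d)) z" by simp
    also have "\<dots> = (f ^^ (n mod d)) z" using funpow_period[OF per] by blast
    finally show ?thesis unfolding P_def using d by auto
  qed
  define \<U> where "\<U> = insert (- P) ((\<lambda>w. - (P - {w})) ` P)"
  have h1: "open (- (P - {w}))" for w using finP by (intro open_Compl finite_imp_closed) auto
  have h2: "open (- P)" using finP by (intro open_Compl finite_imp_closed)
  have op: "\<forall>U\<in>\<U>. open U" unfolding \<U>_def using h1 h2 by blast
  have cov: "\<Union>\<U> = UNIV" unfolding \<U>_def by auto
  obtain n U where U: "U \<in> \<U>" "(f ^^ n) ` {z, f z} \<subseteq> U"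
    using wtc[unfolded weak_topological_contraction_def, rule_format, OF conjI[OF op cov]] by blast
  define a where "a = (f ^^ n) z"
  have b: "(f ^^ n) (f z) = f a" unfolding a_def by (simp add: funpow_swap1)
  have aU: "a \<in> U" and bU: "f a \<in> U" using U(2) b unfolding a_def by auto
  have aP: "a \<in> P" unfolding a_def by (rule inP)
  have bP: "f a \<in> P" using inP[of "Suc n"] unfolding a_def by simp
  have "a \<noteq> f a" using nofix by metis
  then show False using U(1) aU bU aP bP unfolding \<U>_def by auto
qed

theorem theorem5:
  fixes f :: "'a::{t2_space, first_countable_topology} \<Rightarrow> 'a"
  assumes "closed_map_on_space f"
    and "weak_topological_contraction f"
  shows "\<exists>!x. f x = x"
proof -
  note cm = assms(1)[unfolded closed_map_on_space_def]
  note wtc = assms(2)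
  have ex: "\<exists>x. f x = x"
  proof (rule ccontr)
    assume "\<not> (\<exists>x. f x = x)"
    then have nofix: "\<And>x. f x \<noteq> x" by auto
    obtain x :: 'a where True by blast
    define s where "s n = (f ^^ n) x" for n
    have sSuc: "s (Suc n) = f (s n)" for n unfolding s_def by simp
    have injs: "inj s"
    proof (rule injI)
      fix m m' assume eq: "s m = s m'"
      show "m = m'"
      proof (rule ccontr)
        assume "m \<noteq> m'"
        then consider "m < m'" | "m' < m" by linarith
        then show False
        proof cases
          case 1
          have "(f ^^ (m' - m)) (s m) = (f ^^ (m' - m + m)) x" unfolding s_def
            by (simp add: funpow_add)
          then have "(f ^^ (m' - m)) (s m) = s m'" unfolding s_def using 1 by simp
          then show False using no_periodic[OF wtc nofix, of "m' - m" "s m"] eq 1 by auto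
        next
          case 2
          have "(f ^^ (m - m')) (s m') = (f ^^ (m - m' + m')) x" unfolding s_def
            by (simp add: funpow_add)
          then have "(f ^^ (m - m')) (s m') = s m" unfolding s_def using 2 by simp
          then show False using no_periodic[OF wtc nofix, of "m - m'" "s m'"] eq 2 by auto
        qed
      qed
    qed
    have "\<exists>z. \<forall>U. open U \<and> z \<in> U \<longrightarrow> (\<exists>n. s n \<in> U \<and> s (Suc n) \<in> U)"
    proof (rule ccontr)
      assume H: "\<not> ?thesis"
      define \<U> where "\<U> = {U. open U \<and> \<not> (\<exists>n. s n \<in> U \<and> s (Suc n) \<in> U)}"
      have op: "\<forall>U\<in>\<U>. open U" unfolding \<U>_def by auto
      have cov: "\<Union>\<U> = UNIV" using H unfolding \<U>_def by blast
      obtain n U where U: "U \<in> \<U>" "(f ^^ n) ` {x, f x} \<subseteq> U"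
        using wtc[unfolded weak_topological_contraction_def, rule_format, OF conjI[OF op cov]] by blast
      have "s n \<in> U" "s (Suc n) \<in> U" using U(2) unfolding s_def
        by (auto simp: funpow_swap1)
      then show False using U(1) unfolding \<U>_def by auto
    qed
    then obtain z where z: "\<And>U. open U \<Longrightarrow> z \<in> U \<Longrightarrow> \<exists>n. s n \<in> U \<and> s (Suc n) \<in> U"
      by blast
    obtain A :: "nat \<Rightarrow> 'a set" where A: "\<And>i. open (A i)" "\<And>i. z \<in> A i"
      "\<And>S. open S \<Longrightarrow> z \<in> S \<Longrightarrow> eventually (\<lambda>i. A i \<subseteq> S) sequentially"
      using countable_basis_at_decseq by blast
    have "\<forall>k. \<exists>n. s n \<in> A k \<and> s (Suc n) \<in> A k" using z A by blast
    then obtain N where N: "\<And>k. s (N k) \<in> A k" "\<And>k. s (Suc (N k)) \<in> A k" by metis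
    define a where "a k = s (N k)" for k
    have conv: "(\<lambda>k. s (N k)) \<longlonglongrightarrow> z" "(\<lambda>k. s (Suc (N k))) \<longlonglongrightarrow> z"
    proof -
      show "(\<lambda>k. s (N k)) \<longlonglongrightarrow> z"
      proof (rule topological_tendstoI)
        fix S assume "open S" "z \<in> S"
        from A(3)[OF this] show "eventually (\<lambda>k. s (N k) \<in> S) sequentially"
          by (rule eventually_mono) (use N in auto)
      qed
      show "(\<lambda>k. s (Suc (N k))) \<longlonglongrightarrow> z"
      proof (rule topological_tendstoI)
        fix S assume "open S" "z \<in> S"
        from A(3)[OF this] show "eventually (\<lambda>k. s (Suc (N k)) \<in> S) sequentially"
          by (rule eventually_mono) (use N in auto)
      qed
    qed
    have freq: "\<exists>k\<ge>K. s (Suc (N k)) = z" for K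
    proof -
      define C where "C = insert z (range (\<lambda>k. s (N (k + K))))"
      have "(\<lambda>k. s (N (k + K))) \<longlonglongrightarrow> z"
        using LIMSEQ_ignore_initial_segment[OF conv(1), of K] by simp
      then have "closed C" unfolding C_def by (rule closed_seq_limit)
      then have clf: "closed (f ` C)" using cm by blast
      have lim2: "(\<lambda>k. s (Suc (N (k + K)))) \<longlonglongrightarrow> z"
        using LIMSEQ_ignore_initial_segment[OF conv(2), of K] by simp
      have "eventually (\<lambda>k. s (Suc (N (k + K))) \<in> f ` C) sequentially"
        unfolding C_def sSuc by auto
      then have "z \<in> f ` C" using Lim_in_closed_set[OF clf _ _ lim2] by simp
      then obtain c where c: "c \<in> C" "z = f c" by blast
      then have "c \<noteq> z" using nofix by metis
      then obtain k where "c = s (N (k + K))" using c unfolding C_def by auto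
      then show ?thesis using c sSuc by (intro exI[of _ "k + K"]) auto
    qed
    obtain k0 where m: "s (Suc (N k0)) = z" using freq[of 0] by blast
    have Nm: "\<exists>k\<ge>K. N k = N k0" for K
    proof -
      obtain k where "k \<ge> K" "s (Suc (N k)) = z" using freq by blast
      then have "Suc (N k) = Suc (N k0)" using injs m unfolding inj_def by metis
      then show ?thesis using \<open>k \<ge> K\<close> by auto
    qed
    define w where "w = s (N k0)"
    have fw: "f w = z" using m sSuc unfolding w_def by simp
    have "w = z"
    proof (rule ccontr)
      assume "w \<noteq> z"
      then have "open (- {w})" "z \<in> - {w}" by auto
      from topological_tendstoD[OF conv(1) this] obtain K where
        K: "\<And>k. k \<ge> K \<Longrightarrow> s (N k) \<noteq> w" unfolding eventually_sequentially by auto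
      obtain k where "k \<ge> K" "N k = N k0" using Nm[of K] by blast
      then have "s (N k) = w" unfolding w_def by simp
      then show False using K \<open>k \<ge> K\<close> by blast
    qed
    then show False using fw nofix by metis
  qed
  have uniq: "x = y" if fx: "f x = x" and fy: "f y = y" for x y
  proof (rule ccontr)
    assume ne: "x \<noteq> y"
    then obtain U V where UV: "open U" "open V" "x \<in> U" "y \<in> V" "U \<inter> V = {}"
      using hausdorff[OF ne] by blast
    define \<U> where "\<U> = {U, V, - {x, y}}"
    have oxy: "open (- {x, y})" by (intro open_Compl finite_imp_closed) simp
    have op: "\<forall>W\<in>\<U>. open W" unfolding \<U>_def using UV(1,2) oxy by blast
    have cov: "\<Union>\<U> = UNIV" unfolding \<U>_def using UV(3,4) by auto
    have fix_n: "(f ^^ n) p = p" if "f p = p" for n p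
      using that by (induction n) auto
    obtain n W where W: "W \<in> \<U>" "(f ^^ n) ` {x, y} \<subseteq> W"
      using wtc[unfolded weak_topological_contraction_def, rule_format, OF conjI[OF op cov]] by blast
    then have "x \<in> W" "y \<in> W" using fix_n[OF fx, of n] fix_n[OF fy, of n] by auto
    then show False using W(1) UV(3,4,5) unfolding \<U>_def by blast
  qed
  show ?thesis using ex uniq by blast
qed

end
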